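(* Let $P_0$ be a domain, $U$ a free $P_0$-module of rank four with dual $U^*=\operatorname{Hom}_{P_0}(U,P_0)$, and $x,y,z,w$ a basis of $U$ with dual basis $x^*,y^*,z^*,w^*$. Let $$\phi_3=ax^{*(2)}y^*+dx^*y^{*(2)}+ey^{*(2)}z^*+fy^{*(2)}w^*+gx^*z^{*(2)}+hy^*z^{*(2)}+iz^{*(2)}w^*+ky^*w^{*(2)}+mx^*y^*z^*+nx^*y^*w^*+py^*z^*w^*\in D_3U^*$$ with parameters in $P_0$. Assume (a) $a\neq0$, (b) $g\neq0$, and (c) $\ell\phi_3\neq0$ for all nonzero $\ell\in U$. Then $\Gamma_{\phi_3}$ is not identically zero.
   Context: $D_iU^*=\operatorname{Hom}_{P_0}(\operatorname{Sym}_iU,P_0)$; $D_\bullet U^*$ is the divided power algebra, a module over $\operatorname{Sym}_\bullet U$ via $(uv)(u')=v(uu')$. The divided power monomial $x^{*(a_1)}y^{*(a_2)}z^{*(a_3)}w^{*(a_4)}$ takes value $1$ on $x^{a_1}y^{a_2}z^{a_3}w^{a_4}$ and $0$ on all other monomials of that degree; a factor without parenthesized exponent has exponent one. $D_4U$ is the degree-$4$ divided power of $U$. For $X\in D_4U$, $\Delta(X)\in U^{\otimes4}$ is its comultiplication: for $X=\ell_1^{(e_1)}\cdots\ell_s^{(e_s)}$ with $\sum e_j=4$, the sum of all distinct words $u_1\otimes\cdots\otimes u_4$ in which the symbol $\ell_j$ occurs exactly $e_j$ times, extended linearly. $\Gamma_{\phi_3}:D_4U\otimes\bigwedge^4U\to\bigwedge^4U^*$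 is the $P_0$-linear map $\Gamma_{\phi_3}(X\otimes y_1\wedge\cdots\wedge y_4)=\sum(u_1y_1\phi_3)\wedge\cdots\wedge(u_4y_4\phi_3)$, summed over the terms of $\Delta(X)$. *)

theory Defs
  imports "HOL-Library.FuncSet" "HOL-Combinatorics.Permutations"
begin

text \<open>The basis x,y,z,w of U is indexed by 0,1,2,3.
An element of U is given by its coordinate function (nat \<Rightarrow> 'a; only indices < 4 matter).
A monomial of Sym U is given by its exponent list [a1,a2,a3,a4].
An element of the divided power algebra D U^* is a functional on monomials
(nat list \<Rightarrow> 'a), i.e. its values on the monomial basis of Sym U; the divided power
monomial x^{*(a1)}y^{*(a2)}z^{*(a3)}w^{*(a4)} is the functional that is 1 on the exponent
list [a1,a2,a3,a4] and 0 elsewhere.\<close>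

definition unitv :: "nat \<Rightarrow> nat list" where
  "unitv i = map (\<lambda>j. if j = i then 1 else 0) [0..<4]"

text \<open>Module action of u \<in> U = Sym_1 U on D U^*: (u v)(m) = v(u m).\<close>
definition contract :: "(nat \<Rightarrow> 'a::comm_ring_1) \<Rightarrow> (nat list \<Rightarrow> 'a) \<Rightarrow> (nat list \<Rightarrow> 'a)" where
  "contract l v = (\<lambda>\<alpha>. \<Sum>i<4. l i * v (map2 (+) (unitv i) \<alpha>))"

definition phi3 :: "'a::comm_ring_1 \<Rightarrow> 'a \<Rightarrow> 'a \<Rightarrow> 'a \<Rightarrow> 'a \<Rightarrow> 'a \<Rightarrow> 'a \<Rightarrow> 'a \<Rightarrow> 'a \<Rightarrow> 'a \<Rightarrow> 'a
    \<Rightarrow> nat list \<Rightarrow> 'a" where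
  "phi3 a d e f g h i k m n p = (\<lambda>\<alpha>.
     if \<alpha> = [2,1,0,0] then a else
     if \<alpha> = [1,2,0,0] then d else
     if \<alpha> = [0,2,1,0] then e else
     if \<alpha> = [0,2,0,1] then f else
     if \<alpha> = [1,0,2,0] then g else
     if \<alpha> = [0,1,2,0] then h else
     if \<alpha> = [0,0,2,1] then i else
     if \<alpha> = [0,1,0,2] then k else
     if \<alpha> = [1,1,1,0] then m else
     if \<alpha> = [1,1,0,1] then n else
     if \<alpha> = [0,1,1,1] then p else 0)"

text \<open>Coefficient of v_0 \<and> v_1 \<and> v_2 \<and> v_3 \<in> \<And>^4 U^* with respect to
x^* \<and> y^* \<and> z^* \<and> w^*, where M t j is the j-th coordinate of the covector v_t.\<close>
definition wedge4 :: "(nat \<Rightarrow> nat \<Rightarrow> 'a::comm_ring_1) \<Rightarrow> 'a" where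
  "wedge4 M = (\<Sum>q \<in> {q. q permutes {0..<4}}. of_int (sign q) * (\<Prod>t<4. M t (q t)))"

text \<open>A product of divided powers l_1^{(e_1)} ... l_s^{(e_s)} is a list L of pairs (l_j, e_j).
The words of Delta(X): maps from positions {0..3} to symbols {0..s-1}, symbol j used e_j times.\<close>
definition words :: "((nat \<Rightarrow> 'a) \<times> nat) list \<Rightarrow> (nat \<Rightarrow> nat) set" where
  "words L = {w \<in> {0..<4} \<rightarrow>\<^sub>E {0..<length L}.
      \<forall>j<length L. card {t \<in> {0..<4}. w t = j} = snd (L ! j)}"

text \<open>Gamma_{phi} on X \<otimes> y_0 \<and> ... \<and> y_3 with X = product of divided powers L.\<close>
definition Gamma_term :: "(nat list \<Rightarrow> 'a::comm_ring_1) \<Rightarrow> ((nat \<Rightarrow> 'a) \<times> nat) list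
    \<Rightarrow> (nat \<Rightarrow> nat \<Rightarrow> 'a) \<Rightarrow> 'a" where
  "Gamma_term \<phi> L ys = (\<Sum>w \<in> words L.
      wedge4 (\<lambda>t j. contract (fst (L ! (w t))) (contract (ys t) \<phi>) (unitv j)))"

text \<open>Gamma_{phi} extended linearly to a general element of D_4 U \<otimes> \<And>^4 U, given as a
finite sum of terms c \<cdot> X \<otimes> y_0 \<and> ... \<and> y_3.\<close>
definition Gamma :: "(nat list \<Rightarrow> 'a::comm_ring_1)
    \<Rightarrow> ('a \<times> ((nat \<Rightarrow> 'a) \<times> nat) list \<times> (nat \<Rightarrow> nat \<Rightarrow> 'a)) list \<Rightarrow> 'a" where
  "Gamma \<phi> T = sum_list (map (\<lambda>(c, L, ys). c * Gamma_term \<phi> L ys) T)"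

end

theory Submission
  imports Defs
begin
lemma perm_step:
  fixes G :: "(nat \<Rightarrow> nat) \<Rightarrow> 'a::comm_ring_1"
  assumes "finite S" "a \<notin> S"
  shows "(\<Sum>q\<in>{q. q permutes insert a S}. of_int (sign q) * G q) =
    (\<Sum>b\<in>insert a S. \<Sum>q\<in>{q. q permutes S}. (if a = b then 1 else -1) * (of_int (sign q) * G (transpose a b \<circ> q)))"
proof -
  have "(\<Sum>q\<in>{q. q permutes insert a S}. of_int (sign q) * G q) =
    (\<Sum>b\<in>insert a S. \<Sum>q\<in>{q. q permutes S}. of_int (sign (transpose a b \<circ> q)) * G (transpose a b \<circ> q))"
    by (rule sum_over_permutations_insert[OF assms])
  also have "\<dots> = (\<Sum>b\<in>insert a S. \<Sum>q\<in>{q. q permutes S}. (if a = b then 1 else -1) * (of_int (sign q) * G (transpose a b \<circ> q)))"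
  proof (intro sum.cong refl)
    fix b q assume "q \<in> {q. q permutes S}"
    then have "permutation q" using assms(1) permutation_permutes by blast
    then have "sign (transpose a b \<circ> q) = (if a = b then 1 else -1) * sign q"
      by (simp add: sign_compose permutation_swap_id sign_swap_id)
    then show "of_int (sign (transpose a b \<circ> q)) * G (transpose a b \<circ> q) =
      (if a = b then 1 else -1) * (of_int (sign q) * G (transpose a b \<circ> q))" by simp
  qed
  finally show ?thesis .
qed

lemma wedge4_expand:
  "wedge4 M = M 0 0 * M 1 1 * M 2 2 * M 3 3 - M 0 0 * M 1 1 * M 2 3 * M 3 2 - M 0 0 * M 1 2 * M 2 1 * M 3 3 + M 0 0 * M 1 2 * M 2 3 * M 3 1 + M 0 0 * M 1 3 * M 2 1 * M 3 2 - M 0 0 * M 1 3 * M 2 2 * M 3 1 - M 0 1 * M 1 0 * M 2 2 * M 3 3 + M 0 1 * M 1 0 * M 2 3 * M 3 2 + M 0 1 * M 1 2 * M 2 0 * M 3 3 - M 0 1 * M 1 2 * M 2 3 * M 3 0 - M 0 1 * M 1 3 * M 2 0 * M 3 2 + M 0 1 * M 1 3 * M 2 2 * M 3 0 + M 0 2 * M 1 0 * M 2 1 * M 3 3 - M 0 2 * M 1 0 * M 2 3 * M 3 1 - M 0 2 * M 1 1 * M 2 0 * M 3 3 + M 0 2 * M 1 1 * M 2 3 * M 3 0 + M 0 2 * M 1 3 * M 2 0 * M 3 1 - M 0 2 * M 1 3 * M 2 1 * M 3 0 - M 0 3 * M 1 0 * M 2 1 * M 3 2 + M 0 3 * M 1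 0 * M 2 2 * M 3 1 + M 0 3 * M 1 1 * M 2 0 * M 3 2 - M 0 3 * M 1 1 * M 2 2 * M 3 0 - M 0 3 * M 1 2 * M 2 0 * M 3 1 + M 0 3 * M 1 2 * M 2 1 * M 3 0"
proof -
  have S: "{0..<4::nat} = insert 0 (insert 1 (insert 2 (insert 3 {})))" by auto
  have P: "{q. q permutes ({}::nat set)} = {id}" by (auto simp: permutes_empty)
  show ?thesis
    unfolding wedge4_def S
    by (simp add: perm_step P lessThan_nat_numeral transpose_def algebra_simps)
qed


definition W :: "nat list \<Rightarrow> nat \<Rightarrow> nat" where
  "W xs = (\<lambda>t. if t \<in> {0..<4} then xs ! t else undefined)"

lemma W_eq: "W [a0,a1,a2,a3] = W [b0,b1,b2,b3] \<longleftrightarrow> a0 = b0 \<and> a1 = b1 \<and> a2 = b2 \<and> a3 = b3"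
proof
  assume h: "W [a0,a1,a2,a3] = W [b0,b1,b2,b3]"
  have "\<And>t. t < 4 \<Longrightarrow> [a0,a1,a2,a3] ! t = [b0,b1,b2,b3] ! t"
    using h unfolding W_def by (metis atLeastLessThan_iff zero_le)
  from this[of 0] this[of 1] this[of 2] this[of 3] show "a0 = b0 \<and> a1 = b1 \<and> a2 = b2 \<and> a3 = b3" by simp
qed simp

lemma card4: "card {t \<in> {0..<4::nat}. P t} = (\<Sum>t<4. if P t then 1 else 0)"
proof -
  have "card {t \<in> {0..<4::nat}. P t} = (\<Sum>t\<in>{t \<in> {0..<4::nat}. P t}. 1)" by simp
  also have "\<dots> = (\<Sum>t\<in>{0..<4}. if P t then 1 else 0)" by (subst sum.inter_filter) auto
  finally show ?thesis by (simp add: lessThan_atLeast0)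
qed

lemma card4': "card {t. t < (4::nat) \<and> P t} = (\<Sum>t<4. if P t then 1 else 0)"
  using card4[of P] by (simp add: atLeast0LessThan lessThan_def)

lemma PiE4: assumes "w \<in> {0..<4} \<rightarrow>\<^sub>E {0..<n}"
  shows "w = W [w 0, w 1, w 2, w 3] \<and> w 0 < n \<and> w 1 < n \<and> w 2 < n \<and> w 3 < n"
proof -
  have "w = W [w 0, w 1, w 2, w 3]"
  proof
    fix t show "w t = W [w 0, w 1, w 2, w 3] t"
    proof (cases "t < 4")
      case True then have "t = 0 \<or> t = 1 \<or> t = 2 \<or> t = 3" by auto
      then show ?thesis by (auto simp: W_def)
    next
      case False then show ?thesis using assms by (auto simp: W_def PiE_def extensional_def)
    qed
  qed
  moreover have "w 0 < n \<and> w 1 < n \<and> w 2 < n \<and> w 3 < n" using assms by (auto simp: PiE_def Pi_def)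
  ultimately show ?thesis by blast
qed

lemma W_PiE: "a0 < n \<Longrightarrow> a1 < n \<Longrightarrow> a2 < n \<Longrightarrow> a3 < n \<Longrightarrow> W [a0,a1,a2,a3] \<in> {0..<4} \<rightarrow>\<^sub>E {0..<n}"
proof -
  assume h: "a0 < n" "a1 < n" "a2 < n" "a3 < n"
  { fix t :: nat assume "t < 4" then have "t = 0 \<or> t = 1 \<or> t = 2 \<or> t = 3" by auto
    then have "[a0,a1,a2,a3] ! t < n" using h by auto }
  then show ?thesis by (auto simp: W_def PiE_def extensional_def)
qed

lemma W_app: "W [a0,a1,a2,a3] 0 = a0" "W [a0,a1,a2,a3] 1 = a1" "W [a0,a1,a2,a3] 2 = a2" "W [a0,a1,a2,a3] 3 = a3"
  by (auto simp: W_def)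

lemma less2: "(x::nat) < 2 \<Longrightarrow> x = 0 \<or> x = 1" by auto

lemma W_words: "W[a0,a1,a2,a3] \<in> {0..<4} \<rightarrow>\<^sub>E {0..<length L} \<Longrightarrow>
  \<forall>j<length L. card {t \<in> {0..<4}. W[a0,a1,a2,a3] t = j} = snd (L ! j) \<Longrightarrow> W[a0,a1,a2,a3] \<in> words L"
  unfolding words_def mem_Collect_eq by blast

lemma cardW: "card {t \<in> {0..<4::nat}. W [a0,a1,a2,a3] t = j} =
  (if a0 = j then 1 else 0) + (if a1 = j then 1 else 0) + (if a2 = j then 1 else 0) + (if a3 = j then 1 else 0)"
  unfolding card4 by (simp add: lessThan_nat_numeral W_def)

lemma all2: "P 0 \<Longrightarrow> P 1 \<Longrightarrow> \<forall>j<length [x,y]. P j" by (auto simp: less_Suc_eq)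
lemma all1: "P 0 \<Longrightarrow> \<forall>j<length [x]. P j" by (auto simp: less_Suc_eq)

lemma words22: fixes u v :: "nat \<Rightarrow> 'a" shows "words [(u,2),(v,2)] = {W[0,0,1,1], W[0,1,0,1], W[0,1,1,0], W[1,0,0,1], W[1,0,1,0], W[1,1,0,0]}"
proof
  show "words [(u,2),(v,2)] \<subseteq> {W[0,0,1,1], W[0,1,0,1], W[0,1,1,0], W[1,0,0,1], W[1,0,1,0], W[1,1,0,0]}"
  proof
    fix w assume "w \<in> words [(u,2),(v,2)]"
    then have m: "w \<in> {0..<4} \<rightarrow>\<^sub>E {0..<length [(u,2::nat),(v,2::nat)]}"
       "\<forall>j<length [(u,2::nat),(v,2::nat)]. card {t \<in> {0..<4}. w t = j} = snd ([(u,2::nat),(v,2::nat)] ! j)"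
      unfolding words_def mem_Collect_eq by blast+
    have len: "length [(u,2::nat),(v,2::nat)] = 2" by simp
    have pw: "w \<in> {0..<4} \<rightarrow>\<^sub>E {0..<2}" using m(1) by (simp only: len)
    have c0: "card {t \<in> {0..<4}. w t = 0} = 2" using m(2)[rule_format, of 0] by simp
    have c1: "card {t \<in> {0..<4}. w t = 1} = 2" using m(2)[rule_format, of 1] by simp
    from PiE4[OF pw] have w: "w = W [w 0, w 1, w 2, w 3]" and r: "w 0 < 2" "w 1 < 2" "w 2 < 2" "w 3 < 2" by auto
    from c0 c1 have c0': "(\<Sum>t<4. if w t = 0 then 1 else 0) = (2::nat)"
      and c1': "(\<Sum>t<4. if w t = 1 then 1 else 0) = (2::nat)" by (simp_all only: card4)
    have s0: "(if w 0 = 0 then 1 else 0) + (if w 1 = 0 then 1 else 0) + (if w 2 = 0 then 1 else 0) + (if w 3 = 0 then 1 else 0) = (2::nat)"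
      using c0' by (simp add: lessThan_nat_numeral)
    from less2[OF r(1)] less2[OF r(2)] less2[OF r(3)] less2[OF r(4)] s0
    show "w \<in> {W[0,0,1,1], W[0,1,0,1], W[0,1,1,0], W[1,0,0,1], W[1,0,1,0], W[1,1,0,0]}"
      by (subst w) (elim disjE; simp)
  qed
next
  show "{W[0,0,1,1], W[0,1,0,1], W[0,1,1,0], W[1,0,0,1], W[1,0,1,0], W[1,1,0,0]} \<subseteq> words [(u,2),(v,2)]"
    by (intro insert_subsetI empty_subsetI W_words all2 W_PiE) (simp_all only: cardW, simp_all)
qed

lemma words13: fixes u v :: "nat \<Rightarrow> 'a" shows "words [(u,1),(v,3)] = {W[0,1,1,1], W[1,0,1,1], W[1,1,0,1], W[1,1,1,0]}"
proof
  show "words [(u,1),(v,3)] \<subseteq> {W[0,1,1,1], W[1,0,1,1], W[1,1,0,1], W[1,1,1,0]}"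
  proof
    fix w assume "w \<in> words [(u,1),(v,3)]"
    then have m: "w \<in> {0..<4} \<rightarrow>\<^sub>E {0..<length [(u,1::nat),(v,3::nat)]}"
       "\<forall>j<length [(u,1::nat),(v,3::nat)]. card {t \<in> {0..<4}. w t = j} = snd ([(u,1::nat),(v,3::nat)] ! j)"
      unfolding words_def mem_Collect_eq by blast+
    have len: "length [(u,1::nat),(v,3::nat)] = 2" by simp
    have pw: "w \<in> {0..<4} \<rightarrow>\<^sub>E {0..<2}" using m(1) by (simp only: len)
    have c0: "card {t \<in> {0..<4}. w t = 0} = 1" using m(2)[rule_format, of 0] by simp
    from PiE4[OF pw] have w: "w = W [w 0, w 1, w 2, w 3]" and r: "w 0 < 2" "w 1 < 2" "w 2 < 2" "w 3 < 2" by auto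
    from c0 have c0': "(\<Sum>t<4. if w t = 0 then 1 else 0) = (1::nat)" by (simp only: card4)
    have s0: "(if w 0 = 0 then 1 else 0) + (if w 1 = 0 then 1 else 0) + (if w 2 = 0 then 1 else 0) + (if w 3 = 0 then 1 else 0) = (1::nat)"
      using c0' by (simp add: lessThan_nat_numeral)
    from less2[OF r(1)] less2[OF r(2)] less2[OF r(3)] less2[OF r(4)] s0
    show "w \<in> {W[0,1,1,1], W[1,0,1,1], W[1,1,0,1], W[1,1,1,0]}"
      by (subst w) (elim disjE; simp)
  qed
next
  show "{W[0,1,1,1], W[1,0,1,1], W[1,1,0,1], W[1,1,1,0]} \<subseteq> words [(u,1),(v,3)]"
    by (intro insert_subsetI empty_subsetI W_words all2 W_PiE) (simp_all only: cardW, simp_all)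
qed

lemma words4: fixes u :: "nat \<Rightarrow> 'a" shows "words [(u,4)] = {W[0,0,0,0]}"
proof
  show "words [(u,4)] \<subseteq> {W[0,0,0,0]}"
  proof
    fix w assume "w \<in> words [(u,4)]"
    then have "w \<in> {0..<4} \<rightarrow>\<^sub>E {0..<length [(u,4::nat)]}"
      unfolding words_def mem_Collect_eq by blast
    then have pw: "w \<in> {0..<4} \<rightarrow>\<^sub>E {0..<1}" by simp
    from PiE4[OF pw] show "w \<in> {W[0,0,0,0]}" by auto
  qed
next
  show "{W[0,0,0,0]} \<subseteq> words [(u,4)]"
    by (intro insert_subsetI empty_subsetI W_words all1 W_PiE) (simp_all only: cardW, simp_all)
qed

definition Ev :: "nat \<Rightarrow> nat \<Rightarrow> 'a::comm_ring_1" where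
  "Ev r = (\<lambda>j. if j = r then 1 else 0)"

lemma contract_Ev: assumes "r < 4" shows "contract (Ev r) v \<alpha> = v (map2 (+) (unitv r) \<alpha>)"
proof -
  have "r = 0 \<or> r = 1 \<or> r = 2 \<or> r = 3" using assms by auto
  then show ?thesis by (auto simp: contract_def Ev_def lessThan_nat_numeral)
qed

lemma unitv_vals: "unitv 0 = [1,0,0,0]" "unitv 1 = [0,1,0,0]" "unitv 2 = [0,0,1,0]" "unitv 3 = [0,0,0,1]"
  by (simp_all add: unitv_def upt_rec)

lemma entry: "r < 4 \<Longrightarrow> t < 4 \<Longrightarrow> contract (Ev r) (contract (Ev t) \<phi>) (unitv j) = \<phi> (map2 (+) (unitv t) (map2 (+) (unitv r) (unitv j)))"
  by (simp add: contract_Ev)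

lemma upt4: "[0..<4] = [0,1,2,3::nat]" by (simp add: upt_rec)
lemma two: "Suc (Suc 0) = 2" by simp

lemma entry2: assumes "r < 4" "t < 4"
  shows "contract (Ev r) (contract (Ev t) \<phi>) (unitv j) =
    \<phi> [of_bool (0=t) + of_bool (0=r) + of_bool (0=j), of_bool (1=t) + of_bool (1=r) + of_bool (1=j),
       of_bool (2=t) + of_bool (2=r) + of_bool (2=j), of_bool (3=t) + of_bool (3=r) + of_bool (3=j)]"
  using assms by (simp add: contract_Ev unitv_def upt4 add.assoc)

lemma T2: "contract (Ev 2) (contract (Ev 0) \<phi>) (unitv 2) = \<phi> [1,0,2,0]"
  by (simp add: entry2 two)
lemma T1: "phi3 a d e f g h i k m n p [1,0,2,0] = g"
  by (simp add: phi3_def)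
lemma G4: "Gamma_term (phi3 a d e f g h i k m n p) [(Ev 2, 4)] (\<lambda>t. Ev t) = (i*m - g*p)^2"
  unfolding Gamma_term_def words4
  apply (simp add: wedge4_expand entry2 two W_def)
  apply (simp add: phi3_def)
  apply (simp add: power2_eq_square algebra_simps)
  done
lemma W_app1: "W [a0,a1,a2,a3] (Suc 0) = a1" by (simp add: W_def)
lemma G22a: "Gamma_term (phi3 a d e f g h i k m n p) [(Ev 0, 2), (Ev 2, 2)] (\<lambda>t. Ev t) = (a*i - g*n)^2"
  unfolding Gamma_term_def words22
  apply (simp add: W_eq W_app W_app1 wedge4_expand)
  apply (simp add: entry2 two)
  apply (simp add: phi3_def)
  apply (simp add: power2_eq_square algebra_simps)
  done

lemma G22b: "Gamma_term (phi3 a d e f g h i k m n p) [(Ev 2, 2), (Ev 3, 2)] (\<lambda>t. Ev t) = (i*n - g*k)^2"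
  unfolding Gamma_term_def words22
  apply (simp add: W_eq W_app W_app1 wedge4_expand)
  apply (simp add: entry2 two)
  apply (simp add: phi3_def)
  apply (simp add: power2_eq_square algebra_simps)
  done

lemma G13: "Gamma_term (phi3 a d e f g h i k m n p) [(Ev 0, 1), (Ev 1, 3)] (\<lambda>t. Ev t) =
   - a*d*h*k + a*d*p^2 - a*f^2*g - d^2*g*k + d*k*m^2 - 2*d*m*n*p + d*h*n^2 + 2*d*f*g*n"
  unfolding Gamma_term_def words13
  apply (simp add: W_eq W_app W_app1 wedge4_expand)
  apply (simp add: entry2 two)
  apply (simp add: phi3_def)
  apply (simp add: power2_eq_square algebra_simps)
  done
lemma contract_l:
  "contract (\<lambda>j. if j = 0 then - i' else if j = 3 then g' else 0) \<phi> [x0,x1,x2,x3] =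
    - i' * \<phi> [x0+1,x1,x2,x3] + g' * \<phi> [x0,x1,x2,x3+1]"
  by (simp add: contract_def lessThan_nat_numeral unitv_vals)

lemma le2_cases: "(x::nat) \<le> 2 \<Longrightarrow> x = 0 \<or> x = 1 \<or> x = 2" by auto

lemma vanish:
  fixes a d e f g h i k m n p :: "'a::idom"
  assumes r1: "g*n = a*i" and r2: "g*k = i*n" and r3: "g*p = i*m" and r4: "g*f = d*i"
    and s: "x0+x1+x2+x3 = (2::nat)"
  shows "- i * phi3 a d e f g h i k m n p [x0+1,x1,x2,x3] + g * phi3 a d e f g h i k m n p [x0,x1,x2,x3+1] = 0"
proof -
  have "x0 \<le> 2" "x1 \<le> 2" "x2 \<le> 2" "x3 \<le> 2" using s by auto
  from le2_cases[OF this(1)] le2_cases[OF this(2)] le2_cases[OF this(3)] le2_cases[OF this(4)] s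
  show ?thesis
    apply (elim disjE) apply (simp_all add: phi3_def) apply (metis r1 r2 r3 r4 mult.commute)+ done
qed

lemma L1: "length (xs::nat list) = 4 \<Longrightarrow> \<exists>x0 x1 x2 x3. xs = [x0,x1,x2,x3]"
  by (auto simp: length_Suc_conv numeral_eq_Suc)
lemma L2: fixes a i g n :: "'a::idom" shows "(a*i - g*n)^2 = 0 \<Longrightarrow> g*n = a*i" by simp
lemma L3: fixes a d e f g h i k m n p :: "'a::idom"
  assumes r1: "g*n = a*i" and r2: "g*k = i*n" and r3: "g*p = i*m"
  shows "g^2 * (- a*d*h*k + a*d*p^2 - a*f^2*g - d^2*g*k + d*k*m^2 - 2*d*m*n*p + d*h*n^2 + 2*d*f*g*n)
       = - (a*g*(g*f - d*i)^2)"
  using r1 r2 r3 by algebra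
lemma L4: fixes a g x :: "'a::idom" shows "a \<noteq> 0 \<Longrightarrow> g \<noteq> 0 \<Longrightarrow> a*g*(x)^2 = 0 \<Longrightarrow> x = 0" by simp

theorem proposition6p3:
  fixes a d e f g h i k m n p :: "'a::idom"
  assumes "a \<noteq> 0"
    and "g \<noteq> 0"
    and "\<forall>l :: nat \<Rightarrow> 'a. (\<exists>j<4. l j \<noteq> 0) \<longrightarrow>
           (\<exists>\<alpha>. length \<alpha> = 4 \<and> sum_list \<alpha> = 2 \<and>
                contract l (phi3 a d e f g h i k m n p) \<alpha> \<noteq> 0)"
  shows "\<exists>T. (\<forall>(c, L, ys) \<in> set T. sum_list (map snd L) = 4) \<and>
             Gamma (phi3 a d e f g h i k m n p) T \<noteq> 0"
proof -
  let ?\<phi> = "phi3 a d e f g h i k m n p"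
  have key: "\<exists>L. sum_list (map snd L) = 4 \<and> Gamma_term ?\<phi> L (\<lambda>t. Ev t) \<noteq> 0"
  proof (rule ccontr)
    assume "\<not> ?thesis"
    then have z: "\<And>L. sum_list (map snd L) = 4 \<Longrightarrow> Gamma_term ?\<phi> L (\<lambda>t. Ev t) = 0" by blast
    have "(a*i - g*n)^2 = Gamma_term ?\<phi> [(Ev 0, 2), (Ev 2, 2)] (\<lambda>t. Ev t)" by (rule G22a[symmetric])
    also have "\<dots> = 0" by (rule z) simp
    finally have r1: "g*n = a*i" by (rule L2)
    have "(i*n - g*k)^2 = Gamma_term ?\<phi> [(Ev 2, 2), (Ev 3, 2)] (\<lambda>t. Ev t)" by (rule G22b[symmetric])
    also have "\<dots> = 0" by (rule z) simp
    finally have r2: "g*k = i*n" by (rule L2)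
    have "(i*m - g*p)^2 = Gamma_term ?\<phi> [(Ev 2, 4)] (\<lambda>t. Ev t)" by (rule G4[symmetric])
    also have "\<dots> = 0" by (rule z) simp
    finally have r3: "g*p = i*m" by (rule L2)
    have "- a*d*h*k + a*d*p^2 - a*f^2*g - d^2*g*k + d*k*m^2 - 2*d*m*n*p + d*h*n^2 + 2*d*f*g*n
        = Gamma_term ?\<phi> [(Ev 0, 1), (Ev 1, 3)] (\<lambda>t. Ev t)" by (rule G13[symmetric])
    also have "\<dots> = 0" by (rule z) simp
    finally have c13: "- a*d*h*k + a*d*p^2 - a*f^2*g - d^2*g*k + d*k*m^2 - 2*d*m*n*p + d*h*n^2 + 2*d*f*g*n = 0" .
    have eq: "g^2 * (- a*d*h*k + a*d*p^2 - a*f^2*g - d^2*g*k + d*k*m^2 - 2*d*m*n*p + d*h*n^2 + 2*d*f*g*n)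
       = - (a*g*(g*f - d*i)^2)" by (rule L3[OF r1 r2 r3])
    have "- (a*g*(g*f - d*i)^2) = 0" unfolding eq[symmetric] c13 by simp
    then have "a*g*(g*f - d*i)^2 = 0" by simp
    then have "g*f - d*i = 0" using assms(1,2) L4 by blast
    then have r4: "g*f = d*i" by simp
    define l :: "nat \<Rightarrow> 'a" where "l = (\<lambda>j. if j = 0 then - i else if j = 3 then g else 0)"
    have "l 3 \<noteq> 0" using assms(2) by (simp add: l_def)
    then have "\<exists>j<4. l j \<noteq> 0" by (intro exI[of _ 3]) simp
    then obtain \<alpha> where al: "length \<alpha> = 4" "sum_list \<alpha> = 2" "contract l ?\<phi> \<alpha> \<noteq> 0"
      using assms(3) by blast
    obtain x0 x1 x2 x3 where ax: "\<alpha> = [x0,x1,x2,x3]" using L1[OF al(1)] by blast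
    have s: "x0+x1+x2+x3 = 2" using al(2) ax by (simp add: add.assoc)
    have "contract l ?\<phi> \<alpha> = 0"
      unfolding ax l_def contract_l using vanish[OF r1 r2 r3 r4 s] .
    then show False using al(3) by simp
  qed
  then obtain L where L: "sum_list (map snd L) = 4" "Gamma_term ?\<phi> L (\<lambda>t. Ev t) \<noteq> 0" by blast
  show ?thesis
    by (rule exI[of _ "[(1, L, \<lambda>t. Ev t)]"]) (simp add: Gamma_def L)
qed

end
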